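(* Let $(\mathcal A,\varphi,\mathcal F,\Phi)$ be a ncps of type B$'$ with associated infinitesimal ncps $(\mathcal B,\varphi,\varphi')$. Let $(\mathcal A_i)_{i\in I}$ be subalgebras of $\mathcal A$ containing $1_{\mathcal A}$ and $(\mathcal F_i)_{i\in I}$ subalgebras of $\mathcal F$, indexed by the same set $I$. Let $\mathcal B_i$ be the subalgebra of $\mathcal B$ generated by $\mathcal A_i\oplus\{0_{\mathcal F}\}$ and $\mathbb C1_{\mathcal A}\oplus\mathcal F_i$. If $(\mathcal A_i,\mathcal F_i)_{i\in I}$ is B$'$-free in $(\mathcal A,\varphi,\mathcal F,\Phi)$, then $(\mathcal B_i)_{i\in I}$ are infinitesimally free in $(\mathcal B,\varphi,\varphi')$.
   Context: Ncps of type B$'$ $(\mathcal A,\varphi,\mathcal F,\Phi)$: $\mathcal A$ unital complex algebra, $\varphi(1_{\mathcal A})=1$, $\mathcal F$ an algebra which is an $\mathcal A$-bimodule compatible with its multiplication, $\Phi:\mathcal F\to\mathbb C$ linear. $\mathcal B=\mathcal A\oplus\mathcal F$ with product $(a_1,f_1)(a_2,f_2)=(a_1a_2,a_1f_2+f_1a_2+f_1f_2)$, unit $1_{\mathcal A}$; $\varphi(a+f):=\varphi(a)$, $\varphi'(a+f):=\Phi(f)$. $(\mathcal A_i,\mathcal F_i)_{i\in I}$ is B$'$-free if: $(\mathcal A_i)$ are free w.r.t. $\varphi$ ($\varphi(c_1\cdots c_n)=0$ for alternating indices and centered $c_l\in\mathcal A_{i_l}$); with $\mathcal A_0$ the algebra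 generated by all $\mathcal A_i$ and $\mathcal F_0$ the algebra generated by all $\mathcal F_i$, $\Phi(c_0g_1c_1\cdots c_{n-1}g_nc_n)=\varphi(c_0c_n)\prod_{l=1}^{n-1}\varphi(c_l)\Phi(g_1\cdots g_n)$ for $c_l\in\mathcal A_0,g_l\in\mathcal F_0$; and $\Phi(g_1\cdots g_n)=0$ whenever $n\ge2$, $i_1\ne\cdots\ne i_n$, $g_l\in\mathcal F_{i_l}$. Infinitesimal freeness of unital subalgebras $(\mathcal B_i)$: for $i_1\ne\cdots\ne i_n$ and $b_l\in\mathcal B_{i_l}$ with $\varphi(b_l)=0$, $\varphi(b_1\cdots b_n)=0$ and $\varphi'(b_1\cdots b_n)=\varphi(b_1b_n)\varphi(b_2b_{n-1})\cdots\varphi(b_{(n-1)/2}b_{(n+3)/2})\varphi'(b_{(n+1)/2})$ if $n$ odd and $i_1=i_n,i_2=i_{n-1},\dots$, and $0$ otherwise. *)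

theory Defs
  imports Complex_Main
begin

text \<open>
  Noncommutative probability space of type B':
  A is modelled by a type 'a of class ring_1 (unital ring) with an explicit
  complex scalar multiplication smA; F by a type 'f of class ring (associative,
  not necessarily unital) with complex scalar multiplication smF; the
  A-bimodule structure on F is given by the left action lA and right action rA.
\<close>

definition cvs :: "(complex \<Rightarrow> 'v::ab_group_add \<Rightarrow> 'v) \<Rightarrow> bool" where
  "cvs sm \<longleftrightarrow>
     (\<forall>c x y. sm c (x + y) = sm c x + sm c y) \<and>
     (\<forall>c d x. sm (c + d) x = sm c x + sm d x) \<and>
     (\<forall>c d x. sm (c * d) x = sm c (sm d x)) \<and>
     (\<forall>x. sm 1 x = x)"

definition calg :: "(complex \<Rightarrow> 'v::ring \<Rightarrow> 'v) \<Rightarrow> bool" where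
  "calg sm \<longleftrightarrow> cvs sm \<and>
     (\<forall>c x y. sm c (x * y) = sm c x * y \<and> sm c (x * y) = x * sm c y)"

definition clinear_fun :: "(complex \<Rightarrow> 'v::ab_group_add \<Rightarrow> 'v) \<Rightarrow> ('v \<Rightarrow> complex) \<Rightarrow> bool" where
  "clinear_fun sm h \<longleftrightarrow> (\<forall>x y. h (x + y) = h x + h y) \<and> (\<forall>c x. h (sm c x) = c * h x)"

definition ncpsB' ::
  "(complex \<Rightarrow> 'a::ring_1 \<Rightarrow> 'a) \<Rightarrow> ('a \<Rightarrow> complex) \<Rightarrow>
   (complex \<Rightarrow> 'f::ring \<Rightarrow> 'f) \<Rightarrow> ('a \<Rightarrow> 'f \<Rightarrow> 'f) \<Rightarrow> ('f \<Rightarrow> 'a \<Rightarrow> 'f) \<Rightarrow>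
   ('f \<Rightarrow> complex) \<Rightarrow> bool" where
  "ncpsB' smA \<phi> smF lA rA \<Phi> \<longleftrightarrow>
     calg smA \<and> clinear_fun smA \<phi> \<and> \<phi> 1 = 1 \<and>
     calg smF \<and> clinear_fun smF \<Phi> \<and>
     \<comment> \<open>A-bimodule structure on F (complex bilinear)\<close>
     (\<forall>a b f. lA (a + b) f = lA a f + lA b f) \<and>
     (\<forall>a f g. lA a (f + g) = lA a f + lA a g) \<and>
     (\<forall>a f g. rA (f + g) a = rA f a + rA g a) \<and>
     (\<forall>a b f. rA f (a + b) = rA f a + rA f b) \<and>
     (\<forall>c a f. lA (smA c a) f = smF c (lA a f) \<and> lA a (smF c f) = smF c (lA a f)) \<and>
     (\<forall>c a f. rA f (smA c a) = smF c (rA f a) \<and> rA (smF c f) a = smF c (rA f a)) \<and>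
     (\<forall>a b f. lA (a * b) f = lA a (lA b f)) \<and>
     (\<forall>a b f. rA f (a * b) = rA (rA f a) b) \<and>
     (\<forall>f. lA 1 f = f \<and> rA f 1 = f) \<and>
     (\<forall>a b f. lA a (rA f b) = rA (lA a f) b) \<and>
     \<comment> \<open>compatibility with the multiplication of F\<close>
     (\<forall>a f g. lA a (f * g) = lA a f * g) \<and>
     (\<forall>a f g. rA (f * g) a = f * rA g a) \<and>
     (\<forall>a f g. rA f a * g = f * lA a g)"

text \<open>The algebra B = A \<oplus> F, elements as pairs (a, f).\<close>

definition bmul :: "('a::ring_1 \<Rightarrow> 'f::ring \<Rightarrow> 'f) \<Rightarrow> ('f \<Rightarrow> 'a \<Rightarrow> 'f) \<Rightarrow>
    'a \<times> 'f \<Rightarrow> 'a \<times> 'f \<Rightarrow> 'a \<times> 'f" where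
  "bmul lA rA x y = (fst x * fst y, lA (fst x) (snd y) + rA (snd x) (fst y) + snd x * snd y)"

definition bprod :: "('a::ring_1 \<Rightarrow> 'f::ring \<Rightarrow> 'f) \<Rightarrow> ('f \<Rightarrow> 'a \<Rightarrow> 'f) \<Rightarrow>
    ('a \<times> 'f) list \<Rightarrow> 'a \<times> 'f" where
  "bprod lA rA xs = foldr (bmul lA rA) xs (1, 0)"

definition badd :: "'a::plus \<times> 'f::plus \<Rightarrow> 'a \<times> 'f \<Rightarrow> 'a \<times> 'f" where
  "badd x y = (fst x + fst y, snd x + snd y)"

definition bsm :: "(complex \<Rightarrow> 'a \<Rightarrow> 'a) \<Rightarrow> (complex \<Rightarrow> 'f \<Rightarrow> 'f) \<Rightarrow> complex \<Rightarrow> 'a \<times> 'f \<Rightarrow> 'a \<times> 'f" where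
  "bsm smA smF c x = (smA c (fst x), smF c (snd x))"

text \<open>product of a nonempty list in the (possibly non-unital) algebra F\<close>
fun fprod :: "'f::ring list \<Rightarrow> 'f" where
  "fprod [] = 0"
| "fprod [x] = x"
| "fprod (x # y # xs) = x * fprod (y # xs)"

definition subalg :: "(complex \<Rightarrow> 'v::{plus,times,zero} \<Rightarrow> 'v) \<Rightarrow> 'v set \<Rightarrow> bool" where
  "subalg sm S \<longleftrightarrow> 0 \<in> S \<and> (\<forall>x\<in>S. \<forall>y\<in>S. x + y \<in> S \<and> x * y \<in> S) \<and> (\<forall>c. \<forall>x\<in>S. sm c x \<in> S)"

definition gen_alg :: "(complex \<Rightarrow> 'v::{plus,times,zero} \<Rightarrow> 'v) \<Rightarrow> 'v set \<Rightarrow> 'v set" where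
  "gen_alg sm S = \<Inter>{T. subalg sm T \<and> S \<subseteq> T}"

definition subalgB :: "(complex \<Rightarrow> 'a::ring_1 \<Rightarrow> 'a) \<Rightarrow> (complex \<Rightarrow> 'f::ring \<Rightarrow> 'f) \<Rightarrow>
    ('a \<Rightarrow> 'f \<Rightarrow> 'f) \<Rightarrow> ('f \<Rightarrow> 'a \<Rightarrow> 'f) \<Rightarrow> ('a \<times> 'f) set \<Rightarrow> bool" where
  "subalgB smA smF lA rA S \<longleftrightarrow> (0, 0) \<in> S \<and>
     (\<forall>x\<in>S. \<forall>y\<in>S. badd x y \<in> S \<and> bmul lA rA x y \<in> S) \<and> (\<forall>c. \<forall>x\<in>S. bsm smA smF c x \<in> S)"

definition gen_algB :: "(complex \<Rightarrow> 'a::ring_1 \<Rightarrow> 'a) \<Rightarrow> (complex \<Rightarrow> 'f::ring \<Rightarrow> 'f) \<Rightarrow>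
    ('a \<Rightarrow> 'f \<Rightarrow> 'f) \<Rightarrow> ('f \<Rightarrow> 'a \<Rightarrow> 'f) \<Rightarrow> ('a \<times> 'f) set \<Rightarrow> ('a \<times> 'f) set" where
  "gen_algB smA smF lA rA S = \<Inter>{T. subalgB smA smF lA rA T \<and> S \<subseteq> T}"

definition Bsub :: "(complex \<Rightarrow> 'a::ring_1 \<Rightarrow> 'a) \<Rightarrow> (complex \<Rightarrow> 'f::ring \<Rightarrow> 'f) \<Rightarrow>
    ('a \<Rightarrow> 'f \<Rightarrow> 'f) \<Rightarrow> ('f \<Rightarrow> 'a \<Rightarrow> 'f) \<Rightarrow> 'a set \<Rightarrow> 'f set \<Rightarrow> ('a \<times> 'f) set" where
  "Bsub smA smF lA rA Ai Fi = gen_algB smA smF lA rA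
     ((\<lambda>a. (a, 0)) ` Ai \<union> {(smA c 1, f) | c f. f \<in> Fi})"

text \<open>c_0 g_1 c_1 ... g_n c_n as a list of elements of B\<close>
definition interleave :: "'a list \<Rightarrow> 'f list \<Rightarrow> ('a::zero \<times> 'f::zero) list" where
  "interleave cs gs = concat (map2 (\<lambda>c g. [(c, 0), (0, g)]) (butlast cs) gs) @ [(last cs, 0)]"

definition Bprime_free ::
  "(complex \<Rightarrow> 'a::ring_1 \<Rightarrow> 'a) \<Rightarrow> ('a \<Rightarrow> complex) \<Rightarrow>
   (complex \<Rightarrow> 'f::ring \<Rightarrow> 'f) \<Rightarrow> ('a \<Rightarrow> 'f \<Rightarrow> 'f) \<Rightarrow> ('f \<Rightarrow> 'a \<Rightarrow> 'f) \<Rightarrow>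
   ('f \<Rightarrow> complex) \<Rightarrow> 'i set \<Rightarrow> ('i \<Rightarrow> 'a set) \<Rightarrow> ('i \<Rightarrow> 'f set) \<Rightarrow> bool" where
  "Bprime_free smA \<phi> smF lA rA \<Phi> I As Fs \<longleftrightarrow>
     \<comment> \<open>(A_i) free w.r.t. phi\<close>
     (\<forall>cs :: ('i \<times> 'a) list. cs \<noteq> [] \<longrightarrow> successively (\<noteq>) (map fst cs) \<longrightarrow>
        (\<forall>(j, c) \<in> set cs. j \<in> I \<and> c \<in> As j \<and> \<phi> c = 0) \<longrightarrow>
        \<phi> (prod_list (map snd cs)) = 0) \<and>
     \<comment> \<open>factorisation of Phi over A_0 and F_0\<close>
     (let A0 = gen_alg smA (\<Union>j\<in>I. As j); F0 = gen_alg smF (\<Union>j\<in>I. Fs j) in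
      \<forall>cs gs. gs \<noteq> [] \<longrightarrow> length cs = length gs + 1 \<longrightarrow> set cs \<subseteq> A0 \<longrightarrow> set gs \<subseteq> F0 \<longrightarrow>
        \<Phi> (snd (bprod lA rA (interleave cs gs))) =
          \<phi> (hd cs * last cs) * (\<Prod>l\<in>{1..<length gs}. \<phi> (cs ! l)) * \<Phi> (fprod gs)) \<and>
     \<comment> \<open>vanishing of alternating products in the F_i\<close>
     (\<forall>gs :: ('i \<times> 'f) list. length gs \<ge> 2 \<longrightarrow> successively (\<noteq>) (map fst gs) \<longrightarrow>
        (\<forall>(j, g) \<in> set gs. j \<in> I \<and> g \<in> Fs j) \<longrightarrow>
        \<Phi> (fprod (map snd gs)) = 0)"

definition inf_free ::
  "(('a \<times> 'f) \<Rightarrow> ('a \<times> 'f) \<Rightarrow> ('a \<times> 'f)) \<Rightarrow> ('a \<times> 'f) \<Rightarrow>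
   (('a \<times> 'f) \<Rightarrow> complex) \<Rightarrow> (('a \<times> 'f) \<Rightarrow> complex) \<Rightarrow>
   'i set \<Rightarrow> ('i \<Rightarrow> ('a \<times> 'f) set) \<Rightarrow> bool" where
  "inf_free mul one \<psi> \<psi>' I Bs \<longleftrightarrow>
     (\<forall>bs :: ('i \<times> ('a \<times> 'f)) list. bs \<noteq> [] \<longrightarrow> successively (\<noteq>) (map fst bs) \<longrightarrow>
        (\<forall>(j, b) \<in> set bs. j \<in> I \<and> b \<in> Bs j \<and> \<psi> b = 0) \<longrightarrow>
        (let n = length bs; x = map snd bs; p = foldr mul x one in
         \<psi> p = 0 \<and>
         \<psi>' p = (if odd n \<and> rev (map fst bs) = map fst bs
                 then (\<Prod>l<(n - 1) div 2. \<psi> (mul (x ! l) (x ! (n - 1 - l)))) * \<psi>' (x ! (n div 2))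
                 else 0)))"

end

theory Submission
  imports Defs "HOL-Library.Product_Plus"
begin

locale ncps =
  fixes smA :: "complex \<Rightarrow> 'a::ring_1 \<Rightarrow> 'a" and \<phi> :: "'a \<Rightarrow> complex"
    and smF :: "complex \<Rightarrow> 'f::ring \<Rightarrow> 'f"
    and lA :: "'a \<Rightarrow> 'f \<Rightarrow> 'f" and rA :: "'f \<Rightarrow> 'a \<Rightarrow> 'f" and \<Phi> :: "'f \<Rightarrow> complex"
  assumes nc: "ncpsB' smA \<phi> smF lA rA \<Phi>"
begin

lemma ax:
  "\<And>a b f. lA (a + b) f = lA a f + lA b f"
  "\<And>a f g. lA a (f + g) = lA a f + lA a g"
  "\<And>a f g. rA (f + g) a = rA f a + rA g a"
  "\<And>a b f. rA f (a + b) = rA f a + rA f b"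
  "\<And>c a f. lA (smA c a) f = smF c (lA a f)"
  "\<And>c a f. lA a (smF c f) = smF c (lA a f)"
  "\<And>c a f. rA f (smA c a) = smF c (rA f a)"
  "\<And>c a f. rA (smF c f) a = smF c (rA f a)"
  "\<And>a b f. lA (a * b) f = lA a (lA b f)"
  "\<And>a b f. rA f (a * b) = rA (rA f a) b"
  "\<And>f. lA 1 f = f" "\<And>f. rA f 1 = f"
  "\<And>a b f. lA a (rA f b) = rA (lA a f) b"
  "\<And>a f g. lA a (f * g) = lA a f * g"
  "\<And>a f g. rA (f * g) a = f * rA g a"
  "\<And>a f g. rA f a * g = f * lA a g"
  using nc unfolding ncpsB'_def by auto

lemma smA_ax:
  "\<And>c x y. smA c (x + y) = smA c x + smA c y"
  "\<And>c d x. smA (c + d) x = smA c x + smA d x"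
  "\<And>c d x. smA (c * d) x = smA c (smA d x)"
  "\<And>x. smA 1 x = x"
  "\<And>c x y. smA c (x * y) = smA c x * y"
  "\<And>c x y. smA c (x * y) = x * smA c y"
proof -
  have h: "calg smA" using nc by (simp add: ncpsB'_def)
  show "\<And>c x y. smA c (x + y) = smA c x + smA c y"
  "\<And>c d x. smA (c + d) x = smA c x + smA d x"
  "\<And>c d x. smA (c * d) x = smA c (smA d x)"
  "\<And>x. smA 1 x = x"
  "\<And>c x y. smA c (x * y) = smA c x * y"
  "\<And>c x y. smA c (x * y) = x * smA c y" using h unfolding calg_def cvs_def by blast+
qed

lemma smF_ax:
  "\<And>c x y. smF c (x + y) = smF c x + smF c y"
  "\<And>c d x. smF (c + d) x = smF c x + smF d x"
  "\<And>c d x. smF (c * d) x = smF c (smF d x)"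
  "\<And>x. smF 1 x = x"
  "\<And>c x y. smF c (x * y) = smF c x * y"
  "\<And>c x y. smF c (x * y) = x * smF c y"
proof -
  have h: "calg smF" using nc by (simp add: ncpsB'_def)
  show "\<And>c x y. smF c (x + y) = smF c x + smF c y"
  "\<And>c d x. smF (c + d) x = smF c x + smF d x"
  "\<And>c d x. smF (c * d) x = smF c (smF d x)"
  "\<And>x. smF 1 x = x"
  "\<And>c x y. smF c (x * y) = smF c x * y"
  "\<And>c x y. smF c (x * y) = x * smF c y" using h unfolding calg_def cvs_def by blast+
qed

lemma phi_add: "\<phi> (x + y) = \<phi> x + \<phi> y" and phi_sm: "\<phi> (smA c x) = c * \<phi> x"
  and phi1: "\<phi> 1 = 1"
  and Phi_add: "\<Phi> (f + g) = \<Phi> f + \<Phi> g" and Phi_sm: "\<Phi> (smF c f) = c * \<Phi> f"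
  using nc unfolding ncpsB'_def clinear_fun_def by auto

lemma phi0: "\<phi> 0 = 0" using phi_add[of 0 0] by simp
lemma Phi0: "\<Phi> 0 = 0" using Phi_add[of 0 0] by simp

lemma lA0: "lA 0 f = 0" using ax(1)[of 0 0 f] by simp
lemma lA0': "lA a 0 = 0" using ax(2)[of a 0 0] by simp
lemma rA0: "rA 0 a = 0" using ax(3)[of 0 0 a] by simp
lemma rA0': "rA f 0 = 0" using ax(4)[of f 0 0] by simp

lemma smA_0: "smA c 0 = 0" using smA_ax(1)[of c 0 0] by simp
lemma smA_0c: "smA 0 x = 0" using smA_ax(2)[of 0 0 x] by simp
lemma smA_neg: "smA (-1) x = - x"
proof -
  have "smA (-1) x + x = 0" using smA_ax(2)[of "-1" 1 x] smA_ax(4) smA_0c by simp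
  thus ?thesis by (simp add: eq_neg_iff_add_eq_0)
qed
lemma smF_0: "smF c 0 = 0" using smF_ax(1)[of c 0 0] by simp

lemma phi_minus: "\<phi> (x - y) = \<phi> x - \<phi> y"
proof -
  have "x - y = x + smA (-1) y" by (simp add: smA_neg)
  hence "\<phi> (x - y) = \<phi> x + (-1) * \<phi> y" by (simp only: phi_add phi_sm)
  thus ?thesis by simp
qed

lemma sm1_mult: "smA c 1 * x = smA c x" "x * smA c 1 = smA c x"
  using smA_ax(5)[of c 1 x] smA_ax(6)[of c x 1] by simp_all

lemma bmul_simp: "bmul lA rA (a1, f1) (a2, f2) = (a1 * a2, lA a1 f2 + rA f1 a2 + f1 * f2)"
  by (simp add: bmul_def)

lemma bmul_assoc: "bmul lA rA (bmul lA rA x y) z = bmul lA rA x (bmul lA rA y z)"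
  apply (cases x; cases y; cases z)
  apply (simp add: bmul_def ax algebra_simps)
  done

lemma bmul_one: "bmul lA rA (1, 0) x = x" "bmul lA rA x (1, 0) = x"
  by (cases x; simp add: bmul_def ax lA0' rA0)+

lemma bmul_add: "bmul lA rA (x + y) z = bmul lA rA x z + bmul lA rA y z"
  "bmul lA rA z (x + y) = bmul lA rA z x + bmul lA rA z y"
  by (cases x; cases y; cases z; simp add: bmul_def ax algebra_simps)+

lemma bmul_zero: "bmul lA rA 0 z = 0" "bmul lA rA z 0 = 0"
  by (cases z; simp add: bmul_def zero_prod_def lA0 lA0' rA0 rA0')+

lemma bmul_bsm: "bsm smA smF c (bmul lA rA x y) = bmul lA rA (bsm smA smF c x) y"
  by (cases x; cases y; simp add: bmul_def bsm_def ax smF_ax smA_ax)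

lemma bprod_Cons: "bprod lA rA (x # xs) = bmul lA rA x (bprod lA rA xs)"
  by (simp add: bprod_def)
lemma bprod_Nil: "bprod lA rA [] = (1, 0)"
  by (simp add: bprod_def)
lemma bprod_append: "bprod lA rA (xs @ ys) = bmul lA rA (bprod lA rA xs) (bprod lA rA ys)"
  by (induction xs) (simp_all add: bprod_Cons bprod_Nil bmul_one bmul_assoc)

lemma fst_bmul: "fst (bmul lA rA x y) = fst x * fst y" by (simp add: bmul_def)
lemma fst_bprod: "fst (bprod lA rA xs) = prod_list (map fst xs)"
  by (induction xs) (simp_all add: bprod_Cons bprod_Nil fst_bmul)

end

datatype ('a, 'f) letter = AL 'a | GL 'f

fun toB :: "('a::zero, 'f::zero) letter \<Rightarrow> 'a \<times> 'f" where
  "toB (AL c) = (c, 0)"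
| "toB (GL g) = (0, g)"

fun nrm :: "('a::monoid_mult, 'f) letter list \<Rightarrow> 'a list \<times> 'f list" where
  "nrm [] = ([1], [])"
| "nrm (AL c # ps) = (c * hd (fst (nrm ps)) # tl (fst (nrm ps)), snd (nrm ps))"
| "nrm (GL g # ps) = (1 # fst (nrm ps), g # snd (nrm ps))"

fun gls :: "('a, 'f) letter list \<Rightarrow> 'f list" where
  "gls [] = []"
| "gls (AL c # ps) = gls ps"
| "gls (GL g # ps) = g # gls ps"

lemma nrm_len: "length (fst (nrm ps)) = Suc (length (snd (nrm ps)))"
proof (induction ps rule: nrm.induct)
  case (2 c ps)
  then show ?case by (cases "fst (nrm ps)") auto
qed auto

lemma nrm_ne: "fst (nrm ps) \<noteq> []"
  using nrm_len[of ps] by auto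

lemma snd_norm: "snd (nrm ps) = gls ps"
  by (induction ps rule: nrm.induct) auto

lemma nrm_set:
  assumes "1 \<in> S" "\<forall>x\<in>S. \<forall>y\<in>S. x * y \<in> S" "\<forall>c. AL c \<in> set ps \<longrightarrow> c \<in> S"
  shows "set (fst (nrm ps)) \<subseteq> S"
  using assms(3)
proof (induction ps rule: nrm.induct)
  case (2 c ps)
  obtain d r where dr: "fst (nrm ps) = d # r" using nrm_ne[of ps] by (cases "fst (nrm ps)") auto
  with 2 assms show ?case by auto
qed (use assms in auto)

definition mrg :: "'a::times list \<times> 'f list \<Rightarrow> 'a list \<times> 'f list \<Rightarrow> 'a list \<times> 'f list" where
  "mrg A B = (butlast (fst A) @ [last (fst A) * hd (fst B)] @ tl (fst B), snd A @ snd B)"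

lemma nrm_append: "nrm (ps @ qs) = mrg (nrm ps) (nrm qs)"
proof (induction ps rule: nrm.induct)
  case 1
  then show ?case using nrm_ne[of qs] by (cases "nrm qs"; cases "fst (nrm qs)") (auto simp: mrg_def)
next
  case (2 c ps)
  obtain d r where dr: "fst (nrm ps) = d # r" using nrm_ne[of ps] by (cases "fst (nrm ps)") auto
  obtain e t where et: "fst (nrm qs) = e # t" using nrm_ne[of qs] by (cases "fst (nrm qs)") auto
  show ?case using 2 dr et by (cases r) (auto simp: mrg_def mult.assoc)
next
  case (3 g ps)
  obtain d r where dr: "fst (nrm ps) = d # r" using nrm_ne[of ps] by (cases "fst (nrm ps)") auto
  show ?case using 3 dr by (auto simp: mrg_def)
qed

context ncps
begin

lemma IL1: "interleave [d] [] = [(d, 0)]"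
  by (simp add: interleave_def)

lemma IL2: "length cs = Suc (length gs) \<Longrightarrow>
   interleave (d # cs) (g # gs) = (d, 0) # (0, g) # interleave cs gs"
  by (cases cs rule: rev_cases) (auto simp: interleave_def)

lemma bmulA: "bmul lA rA (c, 0) (d, 0) = (c * d, 0)"
  by (simp add: bmul_def lA0' rA0)

lemma bprod_norm: "bprod lA rA (map toB ps) = bprod lA rA (interleave (fst (nrm ps)) (snd (nrm ps)))"
proof (induction ps rule: nrm.induct)
  case 1
  then show ?case by (simp add: IL1 bprod_Cons bprod_Nil bmul_one)
next
  case (2 c ps)
  obtain d r where dr: "fst (nrm ps) = d # r" using nrm_ne[of ps] by (cases "fst (nrm ps)") auto
  have len: "length r = length (snd (nrm ps))" using nrm_len[of ps] dr by simp
  show ?case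
  proof (cases "snd (nrm ps)")
    case Nil
    then have "r = []" using len by simp
    then show ?thesis using 2 dr Nil
      by (simp add: IL1 bprod_Cons bprod_Nil bmul_one bmulA)
  next
    case (Cons g gs)
    have l2: "length r = Suc (length gs)" using len Cons by simp
    show ?thesis using 2 dr Cons
      by (simp add: IL2[OF l2] bprod_Cons flip: bmul_assoc bmulA)
  qed
next
  case (3 g ps)
  then show ?case using nrm_len[of ps] by (simp add: IL2 bprod_Cons bmul_one)
qed

end

lemma fprod_merge: "fprod (xs @ [g, h] @ ys) = fprod (xs @ [g * h] @ ys)"
proof (induction xs)
  case Nil
  then show ?case by (cases ys) (auto simp: mult.assoc)
next
  case (Cons x xs)
  then show ?case by (cases xs) auto
qed

lemma not_successively_split:
  "\<not> successively P l \<Longrightarrow> \<exists>xs a b ys. l = xs @ [a, b] @ ys \<and> \<not> P a b"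
proof (induction l)
  case (Cons x l)
  show ?case
  proof (cases l)
    case Nil
    then show ?thesis using Cons by simp
  next
    case (Cons y l')
    show ?thesis
    proof (cases "P x y")
      case True
      then have "\<not> successively P l" using Cons.prems Cons by simp
      then obtain as a b ys where "l = as @ [a, b] @ ys" "\<not> P a b" using Cons.IH by blast
      then show ?thesis by (metis append_Cons)
    next
      case False
      then show ?thesis using Cons by (metis append_Cons append_Nil)
    qed
  qed
qed simp

locale fset = ncps smA \<phi> smF lA rA \<Phi>
  for smA :: "complex \<Rightarrow> 'a::ring_1 \<Rightarrow> 'a" and \<phi> :: "'a \<Rightarrow> complex"
    and smF :: "complex \<Rightarrow> 'f::ring \<Rightarrow> 'f"
    and lA :: "'a \<Rightarrow> 'f \<Rightarrow> 'f" and rA :: "'f \<Rightarrow> 'a \<Rightarrow> 'f" and \<Phi> :: "'f \<Rightarrow> complex" +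
  fixes I :: "'i set" and As :: "'i \<Rightarrow> 'a set" and Fs :: "'i \<Rightarrow> 'f set"
  assumes subA: "\<forall>i\<in>I. subalg smA (As i) \<and> 1 \<in> As i"
    and subF: "\<forall>i\<in>I. subalg smF (Fs i)"
    and bf: "Bprime_free smA \<phi> smF lA rA \<Phi> I As Fs"
begin

lemma freeA: "cs \<noteq> [] \<Longrightarrow> successively (\<noteq>) (map fst cs) \<Longrightarrow>
        (\<forall>(j, c) \<in> set cs. j \<in> I \<and> c \<in> As j \<and> \<phi> c = 0) \<Longrightarrow>
        \<phi> (prod_list (map snd cs)) = 0"
  using bf unfolding Bprime_free_def by blast

lemma factor: "gs \<noteq> [] \<Longrightarrow> length cs = length gs + 1 \<Longrightarrow>
   set cs \<subseteq> gen_alg smA (\<Union>j\<in>I. As j) \<Longrightarrow> set gs \<subseteq> gen_alg smF (\<Union>j\<in>I. Fs j) \<Longrightarrow>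
        \<Phi> (snd (bprod lA rA (interleave cs gs))) =
          \<phi> (hd cs * last cs) * (\<Prod>l\<in>{1..<length gs}. \<phi> (cs ! l)) * \<Phi> (fprod gs)"
  using bf unfolding Bprime_free_def Let_def by blast

lemma vanish: "length gs \<ge> 2 \<Longrightarrow> successively (\<noteq>) (map fst gs) \<Longrightarrow>
        (\<forall>(j, g) \<in> set gs. j \<in> I \<and> g \<in> Fs j) \<Longrightarrow>
        \<Phi> (fprod (map snd gs)) = 0"
  using bf unfolding Bprime_free_def by blast

lemma As_mul: "j \<in> I \<Longrightarrow> x \<in> As j \<Longrightarrow> y \<in> As j \<Longrightarrow> x * y \<in> As j"
  and As_add: "j \<in> I \<Longrightarrow> x \<in> As j \<Longrightarrow> y \<in> As j \<Longrightarrow> x + y \<in> As j"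
  and As_sm: "j \<in> I \<Longrightarrow> x \<in> As j \<Longrightarrow> smA c x \<in> As j"
  and As_one: "j \<in> I \<Longrightarrow> 1 \<in> As j"
  and As_zero: "j \<in> I \<Longrightarrow> 0 \<in> As j"
  using subA unfolding subalg_def by auto

lemma Fs_mul: "j \<in> I \<Longrightarrow> x \<in> Fs j \<Longrightarrow> y \<in> Fs j \<Longrightarrow> x * y \<in> Fs j"
  using subF unfolding subalg_def by auto

lemma As_minus: "j \<in> I \<Longrightarrow> x \<in> As j \<Longrightarrow> y \<in> As j \<Longrightarrow> x - y \<in> As j"
proof -
  assume a: "j \<in> I" "x \<in> As j" "y \<in> As j"
  have e: "x - y = x + smA (-1) y" by (simp add: smA_neg)
  have "x + smA (-1) y \<in> As j" using a by (intro As_add As_sm)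
  thus ?thesis by (subst e)
qed

definition cent :: "'a \<Rightarrow> 'a" where "cent c = c - smA (\<phi> c) 1"

lemma cent_in: "j \<in> I \<Longrightarrow> c \<in> As j \<Longrightarrow> cent c \<in> As j"
  unfolding cent_def by (intro As_minus As_sm As_one)

lemma phi_cent: "\<phi> (cent c) = 0"
  unfolding cent_def by (simp add: phi_minus phi_sm phi1)

lemma cent_eq: "c = cent c + smA (\<phi> c) 1"
  unfolding cent_def by simp

definition altw :: "('i \<times> 'a) list \<Rightarrow> bool" where
  "altw ts \<longleftrightarrow> successively (\<noteq>) (map fst ts) \<and> (\<forall>(j, c) \<in> set ts. j \<in> I \<and> c \<in> As j \<and> \<phi> c = 0)"

lemma altw_Nil[simp]: "altw []" by (simp add: altw_def)

abbreviation pl :: "('i \<times> 'a) list \<Rightarrow> 'a" where "pl ts \<equiv> prod_list (map snd ts)"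

lemma altw_free: "altw ts \<Longrightarrow> ts \<noteq> [] \<Longrightarrow> \<phi> (pl ts) = 0"
  unfolding altw_def using freeA by blast

lemma altw_append: "altw (xs @ ys) \<longleftrightarrow> altw xs \<and> altw ys \<and> (xs = [] \<or> ys = [] \<or> fst (last xs) \<noteq> fst (hd ys))"
  unfolding altw_def by (auto simp: successively_append_iff last_map hd_map)

lemma altw_Cons: "altw (x # xs) \<longleftrightarrow> fst x \<in> I \<and> snd x \<in> As (fst x) \<and> \<phi> (snd x) = 0 \<and> altw xs \<and> (xs = [] \<or> fst x \<noteq> fst (hd xs))"
  unfolding altw_def by (cases x; cases xs) auto

lemma sep:
  assumes "altw X" "altw Y" "j \<in> I" "D \<in> As j"
    "X \<noteq> [] \<Longrightarrow> fst (last X) \<noteq> j" "Y \<noteq> [] \<Longrightarrow> fst (hd Y) \<noteq> j"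
  shows "\<phi> (pl X * D * pl Y) = \<phi> D * \<phi> (pl X * pl Y)"
proof -
  have "altw (X @ (j, cent D) # Y)"
    using assms cent_in phi_cent by (auto simp: altw_append altw_Cons)
  hence z: "\<phi> (pl X * cent D * pl Y) = 0"
    using altw_free by (fastforce simp: mult.assoc)
  have "pl X * D * pl Y = pl X * cent D * pl Y + smA (\<phi> D) (pl X * pl Y)"
    apply (subst cent_eq[of D])
    by (simp add: algebra_simps sm1_mult smA_ax(5) smA_ax(6) flip: mult.assoc)
  thus ?thesis using z by (simp add: phi_add phi_sm)
qed

lemma junc:
  assumes "altw Y" "Y \<noteq> []" "j \<in> I" "x \<in> As j" "y \<in> As j" "fst (hd Y) \<noteq> j" "fst (last Y) \<noteq> j"
  shows "\<phi> (x * pl Y * y) = 0"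
proof -
  have a2: "altw (Y @ [(j, cent y)])"
    using assms cent_in phi_cent by (auto simp: altw_append altw_Cons)
  have e: "x * pl Y * y = x * pl (Y @ [(j, cent y)]) + smA (\<phi> y) (x * pl Y)"
    apply (subst cent_eq[of y])
    by (simp add: algebra_simps sm1_mult smA_ax(5) smA_ax(6) flip: mult.assoc)
  have "\<phi> (x * pl (Y @ [(j, cent y)])) = \<phi> x * \<phi> (pl (Y @ [(j, cent y)]))"
    using sep[of "[]" "Y @ [(j, cent y)]" j x] a2 assms by (simp add: altw_def)
  also have "\<dots> = 0" using altw_free[OF a2] by simp
  finally have 1: "\<phi> (x * pl (Y @ [(j, cent y)])) = 0" .
  have "\<phi> (x * pl Y) = \<phi> x * \<phi> (pl Y)"
    using sep[of "[]" "Y" j x] assms by (simp add: altw_def)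
  also have "\<dots> = 0" using altw_free assms by simp
  finally show ?thesis using e 1 by (simp add: phi_add phi_sm)
qed

lemma palin:
  "altw X \<Longrightarrow> altw Y \<Longrightarrow> \<phi> (pl X * pl Y) =
     (if map fst (rev X) = map fst Y then (\<Prod>l<length Y. \<phi> (snd (rev X ! l) * snd (Y ! l))) else 0)"
proof (induction Y arbitrary: X)
  case Nil
  then show ?case using altw_free[of X] by (cases X) (auto simp: phi1)
next
  case (Cons y Y)
  obtain j b where y: "y = (j, b)" by (cases y)
  show ?case
  proof (cases X rule: rev_cases)
    case Nil
    then show ?thesis using altw_free[OF Cons(3)] by simp
  next
    case (snoc X' x)
    obtain k a where x: "x = (k, a)" by (cases x)
    show ?thesis
    proof (cases "k = j")
      case False
      have "altw (X @ y # Y)" using Cons(2,3) False snoc x y by (simp add: altw_append altw_Cons)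
      hence "\<phi> (pl (X @ y # Y)) = 0" using altw_free by blast
      then show ?thesis using False snoc x y by (simp add: mult.assoc)
    next
      case True
      have aX': "altw X'" and aY: "altw Y" using Cons(2,3) snoc by (auto simp: altw_append altw_Cons)
      have jI: "j \<in> I" and ab: "a \<in> As j" "b \<in> As j"
        using Cons(2,3) snoc x y True by (auto simp: altw_append altw_Cons)
      have l1: "X' \<noteq> [] \<Longrightarrow> fst (last X') \<noteq> j" using Cons(2) snoc x True by (auto simp: altw_append)
      have l2: "Y \<noteq> [] \<Longrightarrow> fst (hd Y) \<noteq> j" using Cons(3) y by (auto simp: altw_Cons)
      have "pl X * pl (y # Y) = pl X' * (a * b) * pl Y" using snoc x y by (simp add: mult.assoc)
      hence "\<phi> (pl X * pl (y # Y)) = \<phi> (a * b) * \<phi> (pl X' * pl Y)"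
        using sep[OF aX' aY jI As_mul[OF jI ab] l1 l2] by simp
      also have "\<dots> = \<phi> (a * b) * (if map fst (rev X') = map fst Y then (\<Prod>l<length Y. \<phi> (snd (rev X' ! l) * snd (Y ! l))) else 0)"
        using Cons(1)[OF aX' aY] by simp
      finally show ?thesis using snoc x y True
        by (simp add: prod.lessThan_Suc_shift del: prod.lessThan_Suc)
    qed
  qed
qed

lemma group:
  "(\<forall>(j, g) \<in> set tgs. j \<in> I \<and> g \<in> Fs j) \<Longrightarrow> t1 \<in> fst ` set tgs \<Longrightarrow> t2 \<in> fst ` set tgs \<Longrightarrow> t1 \<noteq> t2 \<Longrightarrow>
   \<Phi> (fprod (map snd tgs)) = 0"
proof (induction "length tgs" arbitrary: tgs rule: less_induct)
  case less
  show ?case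
  proof (cases "successively (\<noteq>) (map fst tgs)")
    case True
    have "length tgs \<ge> 2"
    proof (rule ccontr)
      assume "\<not> length tgs \<ge> 2"
      hence "length tgs \<le> 1" by simp
      then have "card (fst ` set tgs) \<le> 1"
        by (metis List.finite_set card_image_le card_length le_trans length_map set_map)
      moreover have "{t1, t2} \<subseteq> fst ` set tgs" using less by auto
      ultimately show False using less(5)
        by (metis List.finite_set card_2_iff card_mono finite_imageI numeral_le_one_iff semiring_norm(69) le_trans)
    qed
    then show ?thesis using vanish True less(2) by blast
  next
    case False
    then obtain xs a b ys where sp: "map fst tgs = xs @ [a, b] @ ys" "a = b"
      using not_successively_split by blast
    then obtain xs' p q ys' where tg: "tgs = xs' @ [p, q] @ ys'" "fst p = fst q"
      by (auto simp: map_eq_append_conv)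
    define tgs' where "tgs' = xs' @ [(fst p, snd p * snd q)] @ ys'"
    have len: "length tgs' < length tgs" using tg tgs'_def by simp
    have el: "\<forall>(j, g) \<in> set tgs'. j \<in> I \<and> g \<in> Fs j"
      using less(2) tg Fs_mul unfolding tgs'_def by (cases p; cases q) auto
    have fs: "fst ` set tgs' = fst ` set tgs" using tg unfolding tgs'_def by auto
    have "\<Phi> (fprod (map snd tgs')) = 0"
      using less(1)[OF len el] less(3-5) fs by auto
    moreover have "fprod (map snd tgs') = fprod (map snd tgs)"
      using tg unfolding tgs'_def by (simp add: fprod_merge[of _ "snd p" "snd q", simplified])
    ultimately show ?thesis by simp
  qed
qed

end

lemma gls_append: "gls (xs @ ys) = gls xs @ gls ys"
  by (induction xs rule: gls.induct) auto

lemma gls_set: "g \<in> set (gls ps) \<longleftrightarrow> GL g \<in> set ps"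
  by (induction ps rule: gls.induct) auto

lemma gls_ne: "gls ps \<noteq> [] \<longleftrightarrow> (\<exists>g. GL g \<in> set ps)"
  using gls_set by (metis ex_in_conv set_empty)

lemma gls_map_AL[simp]: "gls (map AL ys) = []"
  by (induction ys) auto

lemma prod_list_zero: "(0::'a::semiring_1) \<in> set xs \<Longrightarrow> prod_list xs = 0"
  by (induction xs) auto

lemma nrm_long: "gls ps \<noteq> [] \<Longrightarrow> \<exists>c0 mid cl. fst (nrm ps) = c0 # mid @ [cl] \<and> length mid = length (gls ps) - 1"
proof -
  assume a: "gls ps \<noteq> []"
  have l: "length (fst (nrm ps)) = Suc (length (gls ps))" using nrm_len snd_norm by metis
  then obtain c0 r where r: "fst (nrm ps) = c0 # r" by (cases "fst (nrm ps)") auto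
  with a l have "r \<noteq> []" by auto
  then obtain mid cl where "r = mid @ [cl]" by (cases r rule: rev_cases) auto
  with r l show ?thesis by auto
qed

lemma nrm_AL_only: "nrm [AL x] = ([x], [])" by simp

lemma nrm_ctx: assumes "gls ps \<noteq> []"
  shows "nrm (AL x # ps @ [AL y]) =
    (x * hd (fst (nrm ps)) # butlast (tl (fst (nrm ps))) @ [last (fst (nrm ps)) * y], snd (nrm ps))"
proof -
  obtain c0 mid cl where e: "fst (nrm ps) = c0 # mid @ [cl]" using nrm_long[OF assms] by blast
  have "nrm (AL x # ps @ [AL y]) = mrg (nrm [AL x]) (mrg (nrm ps) (nrm [AL y]))"
    by (metis append_Cons append_Nil nrm_append)
  also have "\<dots> = (x * c0 # mid @ [cl * y], snd (nrm ps))"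
    using e by (simp add: mrg_def)
  finally show ?thesis using e by simp
qed

lemma hd_norm_append: "gls ps \<noteq> [] \<Longrightarrow> hd (fst (nrm (ps @ qs))) = hd (fst (nrm ps))"
proof -
  assume a: "gls ps \<noteq> []"
  obtain c0 mid cl where e: "fst (nrm ps) = c0 # mid @ [cl]" using nrm_long[OF a] by blast
  show ?thesis using e by (simp add: nrm_append mrg_def)
qed

context fset
begin

abbreviation "A0 \<equiv> gen_alg smA (\<Union>j\<in>I. As j)"
abbreviation "F0 \<equiv> gen_alg smF (\<Union>j\<in>I. Fs j)"

lemma A0_mul: "x \<in> A0 \<Longrightarrow> y \<in> A0 \<Longrightarrow> x * y \<in> A0"
  unfolding gen_alg_def subalg_def by blast
lemma As_A0: "j \<in> I \<Longrightarrow> x \<in> As j \<Longrightarrow> x \<in> A0"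
  unfolding gen_alg_def by blast
lemma Fs_F0: "j \<in> I \<Longrightarrow> x \<in> Fs j \<Longrightarrow> x \<in> F0"
  unfolding gen_alg_def by blast

definition W :: "('a, 'f) letter list \<Rightarrow> 'a \<times> 'f" where
  "W ps = bprod lA rA (map toB ps)"

definition V :: "'a list \<times> 'f list \<Rightarrow> complex" where
  "V A = \<phi> (hd (fst A) * last (fst A)) * (\<Prod>l\<in>{1..<length (snd A)}. \<phi> (fst A ! l)) * \<Phi> (fprod (snd A))"

lemma W_append: "W (xs @ ys) = bmul lA rA (W xs) (W ys)"
  by (simp add: W_def bprod_append)
lemma W_Nil: "W [] = (1, 0)" by (simp add: W_def bprod_Nil)
lemma W_AL: "W [AL a] = (a, 0)" by (simp add: W_def bprod_Cons bprod_Nil bmul_one)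
lemma W_Cons_AL: "W (AL a # ps) = bmul lA rA (a, 0) (W ps)"
  by (simp add: W_def bprod_Cons)
lemma W_map_AL: "W (map AL ys) = (prod_list ys, 0)"
  by (induction ys) (simp_all add: W_Nil W_Cons_AL bmulA)
lemma fst_W: "gls ps \<noteq> [] \<Longrightarrow> fst (W ps) = 0"
proof -
  assume "gls ps \<noteq> []"
  then obtain g where "g \<in> set (gls ps)" by (cases "gls ps") auto
  hence "GL g \<in> set ps" by (simp add: gls_set)
  hence "fst (toB (GL g)) \<in> set (map fst (map toB ps))" by (simp only: set_map) blast
  hence "0 \<in> set (map fst (map toB ps))" by simp
  thus ?thesis by (simp add: W_def fst_bprod prod_list_zero)
qed

lemma Phi_W:
  assumes "gls ps \<noteq> []" "\<forall>c. AL c \<in> set ps \<longrightarrow> c \<in> A0" "\<forall>g. GL g \<in> set ps \<longrightarrow> g \<in> F0" "1 \<in> A0"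
  shows "\<Phi> (snd (W ps)) = V (nrm ps)"
proof -
  have "set (fst (nrm ps)) \<subseteq> A0" using nrm_set[of A0 ps] assms(2,4) A0_mul by simp
  moreover have "set (snd (nrm ps)) \<subseteq> F0" using assms(3) by (auto simp: snd_norm gls_set)
  moreover have "snd (nrm ps) \<noteq> []" using assms(1) snd_norm by metis
  ultimately show ?thesis
    unfolding W_def V_def bprod_norm
    using factor[of "snd (nrm ps)" "fst (nrm ps)"] nrm_len[of ps] by simp
qed

lemma V_ctx: assumes "gls ps \<noteq> []"
  shows "\<exists>R. V (nrm ps) = \<phi> (hd (fst (nrm ps)) * last (fst (nrm ps))) * R \<and>
     V (nrm (AL x # ps @ [AL y])) = \<phi> (x * hd (fst (nrm ps)) * (last (fst (nrm ps)) * y)) * R"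
proof -
  obtain c0 mid cl where e: "fst (nrm ps) = c0 # mid @ [cl]" and lm: "length mid = length (gls ps) - 1"
    using nrm_long[OF assms] by blast
  define R where "R = (\<Prod>l\<in>{1..<length (snd (nrm ps))}. \<phi> (fst (nrm ps) ! l)) * \<Phi> (fprod (snd (nrm ps)))"
  have pe: "(\<Prod>l\<in>{1..<length (snd (nrm ps))}. \<phi> ((x * c0 # mid @ [cl * y]) ! l)) =
        (\<Prod>l\<in>{1..<length (snd (nrm ps))}. \<phi> (fst (nrm ps) ! l))"
  proof (rule prod.cong)
    fix l assume "l \<in> {1..<length (snd (nrm ps))}"
    then obtain l' where l': "l = Suc l'" "l' < length mid" using lm snd_norm[of ps]
      by (cases l) auto
    show "\<phi> ((x * c0 # mid @ [cl * y]) ! l) = \<phi> (fst (nrm ps) ! l)"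
      using l' e by (simp add: nth_append)
  qed simp
  have nc: "nrm (AL x # ps @ [AL y]) = (x * c0 # mid @ [cl * y], snd (nrm ps))"
    using nrm_ctx[OF assms] e by simp
  have "V (nrm (AL x # ps @ [AL y])) = \<phi> (x * c0 * (cl * y)) * R"
    unfolding V_def nc fst_conv snd_conv pe R_def by (simp add: mult.assoc)
  moreover have "V (nrm ps) = \<phi> (c0 * cl) * R"
    unfolding V_def R_def using e by (simp add: mult.assoc)
  ultimately show ?thesis using e by auto
qed

lemma V_junc:
  assumes "snd A \<noteq> []" "snd B \<noteq> []" "length (fst A) = Suc (length (snd A))"
    "\<phi> (last (fst A) * hd (fst B)) = 0"
  shows "V (mrg A B) = 0"
proof -
  let ?l0 = "length (snd A)"
  have mem: "?l0 \<in> {1..<length (snd (mrg A B))}" using assms by (cases "snd A"; cases "snd B") (auto simp: mrg_def)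
  have "fst (mrg A B) ! ?l0 = last (fst A) * hd (fst B)"
    using assms(3) by (simp add: mrg_def nth_append)
  hence "(\<Prod>l\<in>{1..<length (snd (mrg A B))}. \<phi> (fst (mrg A B) ! l)) = 0"
    using mem assms(4) by (metis (no_types, lifting) finite_atLeastLessThan prod_zero_iff)
  thus ?thesis by (simp add: V_def)
qed

lemma V_zeroF: "\<Phi> (fprod (snd A)) = 0 \<Longrightarrow> V A = 0"
  by (simp add: V_def)

end

lemma gls_concat: "gls (concat xss) = concat (map gls xss)"
  by (induction xss) (auto simp: gls_append)

context fset
begin

definition isA :: "'i \<Rightarrow> ('a, 'f) letter list \<Rightarrow> bool" where
  "isA j ps \<longleftrightarrow> (\<exists>a. ps = [AL a] \<and> a \<in> As j \<and> \<phi> a = 0)"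
definition isW :: "'i \<Rightarrow> ('a, 'f) letter list \<Rightarrow> bool" where
  "isW j ps \<longleftrightarrow> gls ps \<noteq> [] \<and> (\<forall>c. AL c \<in> set ps \<longrightarrow> c \<in> As j) \<and> (\<forall>g. GL g \<in> set ps \<longrightarrow> g \<in> Fs j)"
definition basic :: "('i \<times> ('a, 'f) letter list) list \<Rightarrow> bool" where
  "basic reps \<longleftrightarrow> successively (\<noteq>) (map fst reps) \<and> (\<forall>(j, ps) \<in> set reps. j \<in> I \<and> (isA j ps \<or> isW j ps))"

primrec Dp :: "'a \<Rightarrow> ('a \<times> 'f) list \<Rightarrow> complex" where
  "Dp x [] = 0"
| "Dp x (b # bs) = \<Phi> (snd b) * \<phi> (x * fst (bprod lA rA bs)) + Dp (x * fst b) bs"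

lemma Dp_zero: "Dp 0 bs = 0"
  by (induction bs) (simp_all add: phi0)

lemma basic_Cons: "basic ((j, ps) # reps) \<longleftrightarrow> j \<in> I \<and> (isA j ps \<or> isW j ps) \<and> basic reps \<and> (reps = [] \<or> j \<noteq> fst (hd reps))"
  unfolding basic_def by (cases reps) auto

lemma basic_AL: "basic reps \<Longrightarrow> AL c \<in> set (concat (map snd reps)) \<Longrightarrow> c \<in> A0"
  unfolding basic_def isA_def isW_def using As_A0 by fastforce

lemma basic_GL: "basic reps \<Longrightarrow> GL g \<in> set (concat (map snd reps)) \<Longrightarrow> g \<in> F0"
  unfolding basic_def isA_def isW_def using Fs_F0 by fastforce

lemma pl_A0: "altw X \<Longrightarrow> 1 \<in> A0 \<Longrightarrow> pl X \<in> A0"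
  by (induction X) (auto simp: altw_Cons A0_mul As_A0)

lemma W_three: "bmul lA rA (x, 0) (bmul lA rA (W ps) (W [AL y])) = W (AL x # ps @ [AL y])"
  by (simp add: W_append W_Cons_AL)

lemma CWg:
  assumes "altw X" "altw Y" "j \<in> I" "isW j ps" "basic reps"
    "X \<noteq> [] \<Longrightarrow> fst (last X) \<noteq> j"
    "successively (\<noteq>) (j # map fst Y @ map fst reps)"
    "1 \<in> A0"
  shows "\<Phi> (snd (bmul lA rA (pl X, 0) (bmul lA rA (W ps) (bmul lA rA (pl Y, 0) (W (concat (map snd reps))))))) =
     \<Phi> (snd (W ps)) * \<phi> (pl X * pl Y * fst (bprod lA rA (map (W \<circ> snd) reps)))"
  using assms(2,5,7)
proof (induction reps arbitrary: Y)
  case Nil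
  let ?x = "pl X" and ?y = "pl Y"
  have gp: "gls ps \<noteq> []" and psA: "\<forall>c. AL c \<in> set ps \<longrightarrow> c \<in> As j" and psF: "\<forall>g. GL g \<in> set ps \<longrightarrow> g \<in> Fs j"
    using assms(4) by (auto simp: isW_def)
  have xA: "?x \<in> A0" and yA: "?y \<in> A0" using pl_A0 assms(1,8) Nil(1) by auto
  have e: "bmul lA rA (?x, 0) (bmul lA rA (W ps) (bmul lA rA (?y, 0) (W []))) = W (AL ?x # ps @ [AL ?y])"
  proof -
    have "bmul lA rA (?y, 0) (W []) = W [AL ?y]" by (simp add: W_Nil bmul_one W_AL)
    thus ?thesis by (simp only: W_three)
  qed
  have P1: "\<Phi> (snd (W (AL ?x # ps @ [AL ?y]))) = V (nrm (AL ?x # ps @ [AL ?y]))"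
    apply (rule Phi_W)
    using gp psA psF xA yA assms(3,8) As_A0 Fs_F0 by (auto simp: gls_append)
  have P2: "\<Phi> (snd (W ps)) = V (nrm ps)"
    apply (rule Phi_W) using gp psA psF assms(3,8) As_A0 Fs_F0 by auto
  obtain R where R: "V (nrm ps) = \<phi> (hd (fst (nrm ps)) * last (fst (nrm ps))) * R"
    "V (nrm (AL ?x # ps @ [AL ?y])) = \<phi> (?x * hd (fst (nrm ps)) * (last (fst (nrm ps)) * ?y)) * R"
    using V_ctx[OF gp] by blast
  have ns: "set (fst (nrm ps)) \<subseteq> As j"
    using nrm_set[of "As j" ps] psA As_one As_mul assms(3) by blast
  have D: "hd (fst (nrm ps)) * last (fst (nrm ps)) \<in> As j"
    using ns nrm_ne[of ps] As_mul assms(3) by (meson hd_in_set last_in_set subsetD)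
  have Yh: "Y \<noteq> [] \<Longrightarrow> fst (hd Y) \<noteq> j" using Nil(3) by (cases Y) auto
  have "\<phi> (?x * hd (fst (nrm ps)) * (last (fst (nrm ps)) * ?y)) =
      \<phi> (hd (fst (nrm ps)) * last (fst (nrm ps))) * \<phi> (?x * ?y)"
    using sep[OF assms(1) Nil(1) assms(3) D assms(6) Yh] by (simp add: mult.assoc)
  then show ?case using e P1 P2 R by (simp add: bprod_Nil)
next
  case (Cons r reps')
  obtain k q where r: "r = (k, q)" by (cases r)
  have kI: "k \<in> I" and kq: "isA k q \<or> isW k q" and b': "basic reps'"
    using Cons(3) r by (auto simp: basic_Cons)
  show ?case
  proof (cases "isA k q")
    case True
    then obtain a where q: "q = [AL a]" "a \<in> As k" "\<phi> a = 0" by (auto simp: isA_def)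
    have Yk: "Y \<noteq> [] \<Longrightarrow> fst (last Y) \<noteq> k"
      using Cons(4) r by (cases Y rule: rev_cases) (auto simp: successively_append_iff successively_Cons)
    have aY: "altw (Y @ [(k, a)])" using Cons(2) q kI Yk by (auto simp: altw_append altw_Cons)
    have IH: "\<Phi> (snd (bmul lA rA (pl X, 0) (bmul lA rA (W ps) (bmul lA rA (pl (Y @ [(k, a)]), 0) (W (concat (map snd reps'))))))) =
     \<Phi> (snd (W ps)) * \<phi> (pl X * pl (Y @ [(k, a)]) * fst (bprod lA rA (map (W \<circ> snd) reps')))"
      using Cons(1)[OF aY b'] Cons(4) r by (simp add: comp_def)
    have e1: "bmul lA rA (pl Y, 0) (W (concat (map snd (r # reps')))) =
        bmul lA rA (pl (Y @ [(k, a)]), 0) (W (concat (map snd reps')))"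
      using r q by (simp add: W_Cons_AL bmulA flip: bmul_assoc)
    have e2: "fst (bprod lA rA (map (W \<circ> snd) (r # reps'))) = a * fst (bprod lA rA (map (W \<circ> snd) reps'))"
      using r q by (simp add: bprod_Cons fst_bmul W_AL)
    show ?thesis unfolding e1 e2 IH by (simp add: mult.assoc)
  next
    case False
    with kq have wq: "isW k q" by simp
    have gq: "gls q \<noteq> []" using wq by (simp add: isW_def)
    have rhs0: "fst (bprod lA rA (map (W \<circ> snd) (r # reps'))) = 0"
      using r gq by (simp add: bprod_Cons fst_bmul fst_W)
    let ?x = "pl X" and ?y = "pl Y" and ?rest = "concat (map snd reps')"
    let ?P1 = "AL ?x # ps @ [AL ?y]" and ?P2 = "q @ ?rest"
    have gp: "gls ps \<noteq> []" and psA: "\<forall>c. AL c \<in> set ps \<longrightarrow> c \<in> As j" and psF: "\<forall>g. GL g \<in> set ps \<longrightarrow> g \<in> Fs j"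
      using assms(4) by (auto simp: isW_def)
    have qA: "\<forall>c. AL c \<in> set q \<longrightarrow> c \<in> As k" and qF: "\<forall>g. GL g \<in> set q \<longrightarrow> g \<in> Fs k"
      using wq by (auto simp: isW_def)
    have xA: "?x \<in> A0" and yA: "?y \<in> A0" using pl_A0 assms(1,8) Cons(2) by auto
    have e: "bmul lA rA (?x, 0) (bmul lA rA (W ps) (bmul lA rA (?y, 0) (W (concat (map snd (r # reps')))))) = W (?P1 @ ?P2)"
      using r by (simp add: W_append W_Cons_AL W_AL bmul_assoc)
    have PW: "\<Phi> (snd (W (?P1 @ ?P2))) = V (nrm (?P1 @ ?P2))"
      apply (rule Phi_W)
      using gp psA psF xA yA assms(3,8) As_A0 Fs_F0 qA qF kI basic_AL[OF b'] basic_GL[OF b']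
      by (auto simp: gls_append)
    have V0: "V (nrm (?P1 @ ?P2)) = 0"
    proof (cases "k = j")
      case True
      have Yne: "Y \<noteq> []" using Cons(4) r True by (cases Y) auto
      have Yh: "fst (hd Y) \<noteq> j" using Cons(4) Yne by (cases Y) auto
      have Yl: "fst (last Y) \<noteq> j"
        using Cons(4) r True Yne by (cases Y rule: rev_cases) (auto simp: successively_append_iff successively_Cons)
      have ns: "set (fst (nrm ps)) \<subseteq> As j"
        using nrm_set[of "As j" ps] psA As_one As_mul assms(3) by blast
      have nq: "set (fst (nrm q)) \<subseteq> As j"
        using nrm_set[of "As j" q] qA True As_one As_mul assms(3) by blast
      have l1: "last (fst (nrm ?P1)) = last (fst (nrm ps)) * ?y"
        by (simp only: nrm_ctx[OF gp]) simp
      have h2: "hd (fst (nrm ?P2)) = hd (fst (nrm q))" by (rule hd_norm_append[OF gq])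
      have "\<phi> (last (fst (nrm ps)) * ?y * hd (fst (nrm q))) = 0"
        apply (rule junc[OF Cons(2) Yne assms(3) _ _ Yh Yl])
        using ns nq nrm_ne[of ps] nrm_ne[of q] by (meson hd_in_set last_in_set subsetD)+
      hence "\<phi> (last (fst (nrm ?P1)) * hd (fst (nrm ?P2))) = 0" using l1 h2 by simp
      moreover have "snd (nrm ?P1) \<noteq> []" using gp by (simp add: snd_norm gls_append)
      moreover have "snd (nrm ?P2) \<noteq> []" using gq by (simp add: snd_norm gls_append)
      ultimately have "V (mrg (nrm ?P1) (nrm ?P2)) = 0" using V_junc nrm_len by blast
      then show ?thesis by (simp only: nrm_append[of ?P1 ?P2])
    next
      case False
      define tgs where "tgs = map (Pair j) (gls ps) @ map (Pair k) (gls q) @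
          concat (map (\<lambda>(k, q). map (Pair k) (gls q)) reps')"
      have ms: "map snd tgs = snd (nrm (?P1 @ ?P2))"
        unfolding tgs_def snd_norm by (simp add: gls_append gls_concat map_concat case_prod_beta comp_def)
      have el: "\<forall>(i, g) \<in> set tgs. i \<in> I \<and> g \<in> Fs i"
        using b' psF qF assms(3) kI unfolding tgs_def basic_def isA_def isW_def
        by (fastforce simp: gls_set)
      have t1: "j \<in> fst ` set tgs" using gp unfolding tgs_def by (cases "gls ps") auto
      have t2: "k \<in> fst ` set tgs" using gq unfolding tgs_def by (cases "gls q") auto
      have "\<Phi> (fprod (map snd tgs)) = 0" using group[OF el t1 t2] False by simp
      then show ?thesis using ms V_zeroF by metis
    qed
    show ?thesis unfolding e rhs0 using PW V0 by (simp add: phi0)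
  qed
qed

lemma C:
  assumes "altw X" "basic reps" "X \<noteq> [] \<Longrightarrow> reps \<noteq> [] \<Longrightarrow> fst (last X) \<noteq> fst (hd reps)" "1 \<in> A0"
  shows "\<Phi> (snd (bmul lA rA (pl X, 0) (W (concat (map snd reps))))) = Dp (pl X) (map (W \<circ> snd) reps)"
  using assms
proof (induction reps arbitrary: X)
  case Nil
  then show ?case by (simp add: W_Nil bmul_one Phi0)
next
  case (Cons r reps')
  obtain j ps where r: "r = (j, ps)" by (cases r)
  have jI: "j \<in> I" and kq: "isA j ps \<or> isW j ps" and b': "basic reps'"
    and hd': "reps' \<noteq> [] \<Longrightarrow> j \<noteq> fst (hd reps')"
    using Cons(3) r by (auto simp: basic_Cons)
  show ?case
  proof (cases "isA j ps")
    case True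
    then obtain a where q: "ps = [AL a]" "a \<in> As j" "\<phi> a = 0" by (auto simp: isA_def)
    have aX: "altw (X @ [(j, a)])" using Cons(2,4) q jI r by (auto simp: altw_append altw_Cons)
    note IH = Cons(1)[OF aX b' _ Cons(5)]
    have e1: "bmul lA rA (pl X, 0) (W (concat (map snd (r # reps')))) =
        bmul lA rA (pl (X @ [(j, a)]), 0) (W (concat (map snd reps')))"
      using r q by (simp add: W_Cons_AL bmulA flip: bmul_assoc)
    show ?thesis unfolding e1 using IH hd' r q by (simp add: W_AL Phi0)
  next
    case False
    with kq have w: "isW j ps" by simp
    have X1: "X \<noteq> [] \<Longrightarrow> fst (last X) \<noteq> j" using Cons(4) r by simp
    have sc: "successively (\<noteq>) (j # map fst [] @ map fst reps')"
      using Cons(3) r by (simp add: basic_def)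
    note CWg[OF Cons(2) _ jI w b' X1 sc Cons(5)]
    hence "\<Phi> (snd (bmul lA rA (pl X, 0) (bmul lA rA (W ps) (W (concat (map snd reps')))))) =
     \<Phi> (snd (W ps)) * \<phi> (pl X * fst (bprod lA rA (map (W \<circ> snd) reps')))"
      by (simp add: bmul_one)
    then show ?thesis using r w by (simp add: W_append isW_def fst_W Dp_zero comp_def)
  qed
qed

end

lemma sum_list_concat': "sum_list (concat xss) = sum_list (map sum_list xss)"
  by (induction xss) auto

lemma sum_list_zero': "(\<forall>x\<in>set xs. f x = 0) \<Longrightarrow> sum_list (map f xs) = 0"
  by (induction xs) auto

lemma fst_sum_list: "fst (sum_list xs) = sum_list (map fst xs)"
  by (induction xs) auto

context fset
begin

lemma badd_plus: "badd x y = x + y" by (cases x; cases y) (simp add: badd_def)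

lemma bsm_add: "bsm smA smF c (x + y) = bsm smA smF c x + bsm smA smF c y"
  by (cases x; cases y) (simp add: bsm_def smA_ax(1) smF_ax(1))

lemma bsm_zero: "bsm smA smF c 0 = 0"
  by (simp add: bsm_def zero_prod_def smA_0 smF_0)

lemma bmul_sum_left: "bmul lA rA (sum_list xs) y = sum_list (map (\<lambda>x. bmul lA rA x y) xs)"
  by (induction xs) (simp_all add: bmul_add bmul_zero)

lemma bmul_sum_right: "bmul lA rA y (sum_list xs) = sum_list (map (\<lambda>x. bmul lA rA y x) xs)"
  by (induction xs) (simp_all add: bmul_add bmul_zero)

lemma bsm_sum: "bsm smA smF c (sum_list xs) = sum_list (map (bsm smA smF c) xs)"
  by (induction xs) (simp_all add: bsm_add bsm_zero)

definition inT :: "'i \<Rightarrow> 'a \<times> 'f \<Rightarrow> bool" where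
  "inT j t \<longleftrightarrow> (\<exists>ws. (\<forall>ps\<in>set ws. isW j ps) \<and> t = sum_list (map W ws))"

lemma inT_zero: "inT j 0" unfolding inT_def by (rule exI[of _ "[]"]) simp

lemma inT_add: "inT j t1 \<Longrightarrow> inT j t2 \<Longrightarrow> inT j (t1 + t2)"
  unfolding inT_def by (metis (no_types, lifting) Un_iff map_append set_append sum_list_append)

lemma inT_left: assumes "inT j t" "a \<in> As j" shows "inT j (bmul lA rA (a, 0) t)"
proof -
  obtain ws where ws: "\<forall>ps\<in>set ws. isW j ps" "t = sum_list (map W ws)" using assms unfolding inT_def by blast
  have "bmul lA rA (a, 0) t = sum_list (map W (map (Cons (AL a)) ws))"
    using ws by (simp add: bmul_sum_right comp_def W_Cons_AL)
  moreover have "\<forall>ps\<in>set (map (Cons (AL a)) ws). isW j ps" using ws assms by (auto simp: isW_def)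
  ultimately show ?thesis unfolding inT_def by blast
qed

lemma inT_right: assumes "inT j t" "a \<in> As j" shows "inT j (bmul lA rA t (a, 0))"
proof -
  obtain ws where ws: "\<forall>ps\<in>set ws. isW j ps" "t = sum_list (map W ws)" using assms unfolding inT_def by blast
  have "bmul lA rA t (a, 0) = sum_list (map W (map (\<lambda>w. w @ [AL a]) ws))"
    using ws by (simp add: bmul_sum_left comp_def W_append W_AL)
  moreover have "\<forall>ps\<in>set (map (\<lambda>w. w @ [AL a]) ws). isW j ps" using ws assms by (auto simp: isW_def gls_append)
  ultimately show ?thesis unfolding inT_def by blast
qed

lemma inT_mul: assumes "inT j t1" "inT j t2" shows "inT j (bmul lA rA t1 t2)"
proof -
  obtain ws1 where w1: "\<forall>ps\<in>set ws1. isW j ps" "t1 = sum_list (map W ws1)" using assms unfolding inT_def by blast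
  obtain ws2 where w2: "\<forall>ps\<in>set ws2. isW j ps" "t2 = sum_list (map W ws2)" using assms unfolding inT_def by blast
  define ws where "ws = concat (map (\<lambda>w. map (\<lambda>w'. w @ w') ws2) ws1)"
  have "bmul lA rA t1 t2 = sum_list (map W ws)"
    unfolding w1 w2 ws_def bmul_sum_left
    by (simp add: bmul_sum_right comp_def W_append sum_list_concat' map_concat)
  moreover have "\<forall>ps\<in>set ws. isW j ps" using w1 w2 unfolding ws_def by (auto simp: isW_def gls_append)
  ultimately show ?thesis unfolding inT_def by blast
qed

lemma inT_sm: assumes "inT j t" "j \<in> I" shows "inT j (bsm smA smF c t)"
proof -
  obtain ws where ws: "\<forall>ps\<in>set ws. isW j ps" "t = sum_list (map W ws)" using assms unfolding inT_def by blast
  have e: "bsm smA smF c (W w) = W (AL (smA c 1) # w)" for w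
  proof -
    have "bsm smA smF c (W w) = bsm smA smF c (bmul lA rA (1, 0) (W w))" by (simp add: bmul_one)
    also have "\<dots> = bmul lA rA (smA c 1, 0) (W w)" by (simp only: bmul_bsm) (simp add: bsm_def smF_0)
    finally show ?thesis by (simp add: W_Cons_AL)
  qed
  have "bsm smA smF c t = sum_list (map W (map (Cons (AL (smA c 1))) ws))"
    using ws by (simp add: bsm_sum comp_def e)
  moreover have "\<forall>ps\<in>set (map (Cons (AL (smA c 1))) ws). isW j ps"
    using ws assms As_sm As_one by (auto simp: isW_def)
  ultimately show ?thesis unfolding inT_def by blast
qed

definition Sj :: "'i \<Rightarrow> ('a \<times> 'f) set" where
  "Sj j = {b. \<exists>a t. a \<in> As j \<and> inT j t \<and> b = (a, 0) + t}"

lemma fst_inT: "inT j t \<Longrightarrow> fst t = 0"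
  unfolding inT_def isW_def by (auto simp: fst_sum_list fst_W intro!: sum_list_zero')

lemma Sj_subalg: assumes "j \<in> I" shows "subalgB smA smF lA rA (Sj j)"
  unfolding subalgB_def
proof (intro conjI ballI allI)
  show "(0, 0) \<in> Sj j" unfolding Sj_def using inT_zero As_zero[OF assms]
    by (intro CollectI exI[of _ 0] exI[of _ "0 :: 'a \<times> 'f"]) (simp add: zero_prod_def)
next
  fix x y assume x: "x \<in> Sj j" and y: "y \<in> Sj j"
  obtain a t where a: "a \<in> As j" "inT j t" "x = (a, 0) + t" using x unfolding Sj_def by blast
  obtain a' t' where a': "a' \<in> As j" "inT j t'" "y = (a', 0) + t'" using y unfolding Sj_def by blast
  have "badd x y = (a + a', 0) + (t + t')" using a a' by (simp add: badd_plus algebra_simps)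
  thus "badd x y \<in> Sj j" unfolding Sj_def using a a' As_add[OF assms] inT_add by blast
  have "bmul lA rA x y = (a * a', 0) + (bmul lA rA (a, 0) t' + bmul lA rA t (a', 0) + bmul lA rA t t')"
    using a a' by (simp add: bmul_add bmulA algebra_simps)
  moreover have "inT j (bmul lA rA (a, 0) t' + bmul lA rA t (a', 0) + bmul lA rA t t')"
    using a a' by (intro inT_add inT_left inT_right inT_mul)
  ultimately show "bmul lA rA x y \<in> Sj j" unfolding Sj_def using As_mul[OF assms a(1) a'(1)] by blast
next
  fix c x assume x: "x \<in> Sj j"
  obtain a t where a: "a \<in> As j" "inT j t" "x = (a, 0) + t" using x unfolding Sj_def by blast
  have "bsm smA smF c x = (smA c a, 0) + bsm smA smF c t" using a by (simp add: bsm_add bsm_def smF_0 smA_ax(1))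
  thus "bsm smA smF c x \<in> Sj j" unfolding Sj_def using As_sm[OF assms a(1)] inT_sm[OF a(2) assms] by blast
qed

lemma Bsub_Sj: assumes "j \<in> I" shows "Bsub smA smF lA rA (As j) (Fs j) \<subseteq> Sj j"
proof -
  have gens: "(\<lambda>a. (a, 0)) ` As j \<union> {(smA c 1, f) |c f. f \<in> Fs j} \<subseteq> Sj j"
  proof
    fix b assume "b \<in> (\<lambda>a. (a, 0)) ` As j \<union> {(smA c 1, f) |c f. f \<in> Fs j}"
    then consider (A) a where "a \<in> As j" "b = (a, 0)" | (F) c f where "f \<in> Fs j" "b = (smA c 1, f)" by blast
    then show "b \<in> Sj j"
    proof cases
      case A
      then show ?thesis unfolding Sj_def using inT_zero by fastforce
    next
      case F
      have "W [GL f] = (0, f)" by (simp add: W_def bprod_Cons bprod_Nil bmul_one)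
      hence "b = (smA c 1, 0) + W [GL f]" using F by simp
      moreover have "inT j (W [GL f])" unfolding inT_def using F
        by (intro exI[of _ "[[GL f]]"]) (simp add: isW_def)
      ultimately show ?thesis unfolding Sj_def using As_sm[OF assms As_one[OF assms]] by blast
    qed
  qed
  show ?thesis unfolding Bsub_def gen_algB_def using Sj_subalg[OF assms] gens by blast
qed

end

lemma sum_list_update_nat:
  "p < length xs \<Longrightarrow> sum_list (map f (xs[p := y])) + (f (xs ! p) :: nat) = sum_list (map f xs) + f y"
proof (induction xs arbitrary: p)
  case (Cons x xs)
  then show ?case by (cases p) auto
qed simp

context fset
begin

lemma bprod_upd_add: "p < length bs \<Longrightarrow>
   bprod lA rA (bs[p := x + y]) = bprod lA rA (bs[p := x]) + bprod lA rA (bs[p := y])"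
proof (induction bs arbitrary: p)
  case (Cons b bs)
  then show ?case by (cases p) (auto simp: bprod_Cons bmul_add)
qed simp

lemma Dp_add_x: "Dp (x + y) bs = Dp x bs + Dp y bs"
  by (induction bs arbitrary: x y) (simp_all add: algebra_simps phi_add)

lemma Dp_upd_add: "p < length bs \<Longrightarrow> Dp x (bs[p := u + v]) = Dp x (bs[p := u]) + Dp x (bs[p := v])"
proof (induction bs arbitrary: p x)
  case (Cons b bs)
  show ?case
  proof (cases p)
    case 0
    then show ?thesis by (simp add: algebra_simps Phi_add Dp_add_x)
  next
    case (Suc p')
    then have p': "p' < length bs" using Cons by simp
    show ?thesis using Suc Cons.IH[OF p'] bprod_upd_add[OF p']
      by (simp add: algebra_simps phi_add)
  qed
qed simp

lemma bprod_W: "bprod lA rA (map W pss) = W (concat pss)"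
  by (induction pss) (simp_all add: bprod_Cons bprod_Nil W_Nil W_append)

definition val :: "'i \<times> 'a \<times> ('a, 'f) letter list list \<Rightarrow> 'a \<times> 'f" where
  "val g = (fst (snd g), 0) + sum_list (map W (snd (snd g)))"

definition gd :: "'i \<times> 'a \<times> ('a, 'f) letter list list \<Rightarrow> bool" where
  "gd g \<longleftrightarrow> fst g \<in> I \<and> fst (snd g) \<in> As (fst g) \<and> \<phi> (fst (snd g)) = 0 \<and> (\<forall>ps\<in>set (snd (snd g)). isW (fst g) ps)"

definition good :: "('i \<times> 'a \<times> ('a, 'f) letter list list) list \<Rightarrow> bool" where
  "good G \<longleftrightarrow> successively (\<noteq>) (map fst G) \<and> (\<forall>g\<in>set G. gd g)"

definition mu :: "'i \<times> 'a \<times> ('a, 'f) letter list list \<Rightarrow> nat" where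
  "mu g = length (snd (snd g)) + (if fst (snd g) \<noteq> 0 \<and> snd (snd g) \<noteq> [] then 1 else 0)"

lemma good_upd: assumes "good G" "p < length G" "fst u = fst (G ! p)" "gd u"
  shows "good (G[p := u])"
proof -
  have "map fst (G[p := u]) = map fst G" using assms(2,3)
    by (metis list_update_id map_update)
  moreover have "set (G[p := u]) \<subseteq> insert u (set G)" by (rule set_update_subset_insert)
  ultimately show ?thesis using assms unfolding good_def by auto
qed

lemma reduce: "good G \<Longrightarrow> 1 \<in> A0 \<Longrightarrow> \<Phi> (snd (bprod lA rA (map val G))) = Dp 1 (map val G)"
proof (induction "sum_list (map mu G)" arbitrary: G rule: less_induct)
  case less
  show ?case
  proof (cases "\<exists>p<length G. mu (G ! p) \<ge> 2")
    case True
    then obtain p where p: "p < length G" "mu (G ! p) \<ge> 2" by blast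
    obtain j a ws where g: "G ! p = (j, a, ws)" by (cases "G ! p") auto
    have gdp: "gd (G ! p)" using less(2) p(1) unfolding good_def by simp
    have gdj: "j \<in> I" "a \<in> As j" "\<phi> a = 0" "\<forall>ps\<in>set ws. isW j ps" using gdp g by (auto simp: gd_def)
    have m2: "length ws + (if a \<noteq> 0 \<and> ws \<noteq> [] then 1 else 0) \<ge> 2" using p(2) g by (simp add: mu_def)
    obtain u v where uv: "val (G ! p) = val u + val v" "fst u = j" "fst v = j" "gd u" "gd v"
      "mu u < mu (G ! p)" "mu v < mu (G ! p)"
    proof (cases "length ws \<ge> 2")
      case True
      then obtain w ws' where ws: "ws = w # ws'" by (cases ws) auto
      have 1: "val (G ! p) = val (j, a, ws') + val (j, 0, [w])"
        by (simp add: val_def g ws algebra_simps flip: zero_prod_def)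
      have 2: "gd (j, a, ws')" "gd (j, 0, [w])" using gdj ws As_zero phi0 by (auto simp: gd_def)
      have 3: "mu (j, a, ws') < mu (G ! p)" "mu (j, 0, [w]) < mu (G ! p)"
        using m2 p(2) by (auto simp: mu_def g ws)
      show ?thesis by (rule that[OF 1 _ _ 2 3]) simp_all
    next
      case False
      with m2 have l1: "length ws = 1" and an: "a \<noteq> 0" by (auto split: if_splits)
      then obtain w where ws: "ws = [w]" by (cases ws) auto
      have 1: "val (G ! p) = val (j, a, []) + val (j, 0, [w])"
        by (simp add: val_def g ws algebra_simps flip: zero_prod_def)
      have 2: "gd (j, a, [])" "gd (j, 0, [w])" using gdj ws As_zero phi0 by (auto simp: gd_def)
      have 3: "mu (j, a, []) < mu (G ! p)" "mu (j, 0, [w]) < mu (G ! p)"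
        using p(2) an by (auto simp: mu_def g ws)
      show ?thesis by (rule that[OF 1 _ _ 2 3]) simp_all
    qed
    have fu: "fst u = fst (G ! p)" and fv: "fst v = fst (G ! p)" using uv g by auto
    have gu: "good (G[p := u])" and gv: "good (G[p := v])"
      using good_upd[OF less(2) p(1)] fu fv uv by auto
    have mu1: "sum_list (map mu (G[p := u])) < sum_list (map mu G)"
      using sum_list_update_nat[OF p(1), of mu u] uv(6) by simp
    have mu2: "sum_list (map mu (G[p := v])) < sum_list (map mu G)"
      using sum_list_update_nat[OF p(1), of mu v] uv(7) by simp
    note IH1 = less(1)[OF mu1 gu less(3)]
    note IH2 = less(1)[OF mu2 gv less(3)]
    have lp: "p < length (map val G)" using p by simp
    have mG: "map val G = (map val G)[p := val u + val v]"
    proof -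
      have "(map val G)[p := val u + val v] = map val G" using uv(1) p(1) by (simp add: list_update_same_conv)
      thus ?thesis by simp
    qed
    show ?thesis
      apply (subst (1 2) mG)
      unfolding bprod_upd_add[OF lp] Dp_upd_add[OF lp]
      using IH1 IH2 by (simp add: Phi_add snd_add map_update)
  next
    case False
    have small: "\<forall>g\<in>set G. mu g \<le> 1"
    proof
      fix g assume "g \<in> set G"
      then obtain i where i: "i < length G" "G ! i = g" by (auto simp: in_set_conv_nth)
      hence "\<not> 2 \<le> mu g" using False by blast
      thus "mu g \<le> 1" by simp
    qed
    define conv where "conv g = (fst g, if snd (snd g) = [] then [AL (fst (snd g))] else hd (snd (snd g)))" for g :: "'i \<times> 'a \<times> ('a, 'f) letter list list"
    have cv: "val g = W (snd (conv g)) \<and> (isA (fst g) (snd (conv g)) \<or> isW (fst g) (snd (conv g)))"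
      if "g \<in> set G" for g
    proof -
      obtain j a ws where g: "g = (j, a, ws)" by (cases g) auto
      have gg: "gd g" using less(2) that unfolding good_def by simp
      have m: "mu g \<le> 1" using small that by simp
      show ?thesis
      proof (cases ws)
        case Nil
        then show ?thesis using g gg by (simp add: val_def conv_def W_AL isA_def gd_def)
      next
        case (Cons w ws')
        with m g have "ws' = []" "a = 0" by (auto simp: mu_def split: if_splits)
        then show ?thesis using g gg Cons by (simp add: val_def conv_def gd_def zero_prod_def)
      qed
    qed
    have e: "map val G = map (W \<circ> snd) (map conv G)"
      unfolding map_map map_eq_conv using cv by simp
    have fc: "fst (conv g) = fst g" for g by (simp add: conv_def)
    have b1: "map fst (map conv G) = map fst G" by (simp add: fc)
    have b2: "fst x \<in> I \<and> (isA (fst x) (snd x) \<or> isW (fst x) (snd x))" if xin: "x \<in> set (map conv G)" for x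
    proof -
      obtain g where g: "g \<in> set G" "x = conv g" using xin by (simp only: set_map) blast
      show ?thesis using cv[OF g(1)] less(2) g by (simp add: good_def gd_def fc)
    qed
    have b: "basic (map conv G)"
      unfolding basic_def
    proof (intro conjI ballI)
      show "successively (\<noteq>) (map fst (map conv G))" unfolding b1 using less(2) by (simp add: good_def)
      fix x assume x: "x \<in> set (map conv G)"
      show "case x of (j, ps) \<Rightarrow> j \<in> I \<and> (isA j ps \<or> isW j ps)" using b2[OF x] by (cases x) simp
    qed
    have "\<Phi> (snd (bmul lA rA (pl [], 0) (W (concat (map snd (map conv G)))))) = Dp (pl []) (map (W \<circ> snd) (map conv G))"
      using C[OF altw_Nil b _ less(3)] by simp
    then show ?thesis unfolding e
      by (simp add: bmul_one bprod_W flip: map_map)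
  qed
qed

end

lemma pal_iff: assumes "k < length t"
  shows "(rev (take k t) = drop (Suc k) t) \<longleftrightarrow> (odd (length t) \<and> rev t = t \<and> k = length t div 2)"
proof -
  have t: "t = take k t @ t ! k # drop (Suc k) t" using assms by (simp add: id_take_nth_drop)
  show ?thesis
  proof
    assume c: "rev (take k t) = drop (Suc k) t"
    have "k = length t - Suc k" using arg_cong[OF c, of length] assms by simp
    hence l: "length t = Suc (2 * k)" using assms by arith
    have c2: "rev (drop (Suc k) t) = take k t" using arg_cong[OF c, of rev] by simp
    have "rev t = rev (drop (Suc k) t) @ t ! k # rev (take k t)" by (subst t) simp
    also have "\<dots> = take k t @ t ! k # drop (Suc k) t" by (simp only: c c2)
    also have "\<dots> = t" by (rule t[symmetric])
    finally show "odd (length t) \<and> rev t = t \<and> k = length t div 2" using l by simp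
  next
    assume a: "odd (length t) \<and> rev t = t \<and> k = length t div 2"
    hence "length t = Suc (2 * k)" using odd_two_times_div_two_succ[of "length t"] by simp
    hence l: "length (rev (drop (Suc k) t)) = length (take k t)" using assms by simp
    have e1: "rev t = rev (drop (Suc k) t) @ t ! k # rev (take k t)" by (subst t) simp
    have "rev (drop (Suc k) t) @ t ! k # rev (take k t) = rev t" using e1 by simp
    also have "\<dots> = t" using a by simp
    also have "\<dots> = take k t @ t ! k # drop (Suc k) t" by (rule t)
    finally have "rev (drop (Suc k) t) @ t ! k # rev (take k t) = take k t @ t ! k # drop (Suc k) t" .
    thus "rev (take k t) = drop (Suc k) t" using l by (simp add: append_eq_append_conv)
  qed
qed

context fset
begin

lemma Dp_sum: "Dp x bs = (\<Sum>k<length bs. \<Phi> (snd (bs ! k)) *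
    \<phi> (x * prod_list (map fst (take k bs)) * prod_list (map fst (drop (Suc k) bs))))"
proof (induction bs arbitrary: x)
  case (Cons b bs)
  show ?case
    by (simp add: Cons.IH sum.lessThan_Suc_shift fst_bprod mult.assoc del: sum.lessThan_Suc)
qed simp

lemma altw_take: "altw xs \<Longrightarrow> altw (take k xs)"
  using altw_append[of "take k xs" "drop k xs"] by simp
lemma altw_drop: "altw xs \<Longrightarrow> altw (drop k xs)"
  using altw_append[of "take k xs" "drop k xs"] by simp

lemma main: "inf_free (bmul lA rA) (1, 0) (\<lambda>b. \<phi> (fst b)) (\<lambda>b. \<Phi> (snd b)) I
           (\<lambda>i. Bsub smA smF lA rA (As i) (Fs i))"
  unfolding inf_free_def
proof (intro allI impI)
  fix bs :: "('i \<times> ('a \<times> 'f)) list"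
  assume ne: "bs \<noteq> []" and alt: "successively (\<noteq>) (map fst bs)"
    and el: "\<forall>(j, b) \<in> set bs. j \<in> I \<and> b \<in> Bsub smA smF lA rA (As j) (Fs j) \<and> \<phi> (fst b) = 0"
  define n where "n = length bs"
  define x where "x = map snd bs"
  have rep: "\<forall>y\<in>set bs. \<exists>aw. fst aw \<in> As (fst y) \<and> \<phi> (fst aw) = 0 \<and> (\<forall>ps\<in>set (snd aw). isW (fst y) ps)
      \<and> snd y = (fst aw, 0) + sum_list (map W (snd aw))"
  proof
    fix y assume y: "y \<in> set bs"
    obtain j b where jb: "y = (j, b)" by (cases y)
    have j1: "j \<in> I" "b \<in> Bsub smA smF lA rA (As j) (Fs j)" "\<phi> (fst b) = 0" using el y jb by auto
    have j: "j \<in> I" "b \<in> Sj j" "\<phi> (fst b) = 0" using j1 Bsub_Sj[OF j1(1)] by auto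
    then obtain a t where at: "a \<in> As j" "inT j t" "b = (a, 0) + t" unfolding Sj_def by blast
    then obtain ws where ws: "\<forall>ps\<in>set ws. isW j ps" "t = sum_list (map W ws)" unfolding inT_def by blast
    have "fst b = a" using at fst_inT by simp
    thus "\<exists>aw. fst aw \<in> As (fst y) \<and> \<phi> (fst aw) = 0 \<and> (\<forall>ps\<in>set (snd aw). isW (fst y) ps)
      \<and> snd y = (fst aw, 0) + sum_list (map W (snd aw))"
      using at ws j jb by (intro exI[of _ "(a, ws)"]) auto
  qed
  then obtain f where f: "\<forall>y\<in>set bs. fst (f y) \<in> As (fst y) \<and> \<phi> (fst (f y)) = 0 \<and> (\<forall>ps\<in>set (snd (f y)). isW (fst y) ps)
      \<and> snd y = (fst (f y), 0) + sum_list (map W (snd (f y)))"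
    using bchoice[OF rep] by blast
  define G where "G = map (\<lambda>y. (fst y, fst (f y), snd (f y))) bs"
  have mv: "map val G = x" unfolding G_def x_def using f by (simp add: val_def)
  have gG: "good G" unfolding good_def G_def using alt f el by (auto simp: gd_def comp_def)
  obtain j0 b0 where "(j0, b0) \<in> set bs" using ne by (cases bs) auto
  hence "j0 \<in> I" using el by auto
  hence one: "1 \<in> A0" using As_A0 As_one by blast
  define Ta where "Ta = map (\<lambda>y. (fst y, fst (snd y))) bs"
  have aT: "altw Ta" unfolding altw_def Ta_def
  proof
    show "successively (\<noteq>) (map fst (map (\<lambda>y. (fst y, fst (snd y))) bs))" using alt by (simp add: comp_def)
    show "\<forall>(j, c)\<in>set (map (\<lambda>y. (fst y, fst (snd y))) bs). j \<in> I \<and> c \<in> As j \<and> \<phi> c = 0"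
    proof (intro ballI)
      fix z assume "z \<in> set (map (\<lambda>y. (fst y, fst (snd y))) bs)"
      then obtain y where y: "y \<in> set bs" "z = (fst y, fst (snd y))" by auto
      have fy: "snd y = (fst (f y), 0) + sum_list (map W (snd (f y)))" "\<forall>ps\<in>set (snd (f y)). isW (fst y) ps"
        using f y(1) by auto
      have "inT (fst y) (sum_list (map W (snd (f y))))" unfolding inT_def using fy(2) by blast
      hence "fst (sum_list (map W (snd (f y)))) = 0" by (rule fst_inT)
      hence "fst (snd y) = fst (f y)" using fy(1) by simp
      then show "case z of (j, c) \<Rightarrow> j \<in> I \<and> c \<in> As j \<and> \<phi> c = 0" using f el y by auto
    qed
  qed
  have fstT: "map fst Ta = map fst bs" unfolding Ta_def by (simp add: comp_def)
  have pT: "prod_list (map fst (take k x)) = pl (take k Ta)" for k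
    unfolding x_def Ta_def by (simp add: take_map comp_def)
  have pT2: "prod_list (map fst (drop k x)) = pl (drop k Ta)" for k
    unfolding x_def Ta_def by (simp add: drop_map comp_def)
  define p where "p = foldr (bmul lA rA) x (1, 0)"
  have pb: "p = bprod lA rA x" unfolding p_def bprod_def ..
  have first: "\<phi> (fst p) = 0"
  proof -
    have "fst p = pl Ta" unfolding pb fst_bprod using pT[of n] unfolding x_def n_def Ta_def by simp
    thus ?thesis using altw_free[OF aT] ne unfolding Ta_def by simp
  qed
  have lx: "length x = n" unfolding x_def n_def by simp
  have lT: "length Ta = n" unfolding Ta_def n_def by simp
  have "\<Phi> (snd p) = Dp 1 x" unfolding pb using reduce[OF gG one] mv by simp
  also have "\<dots> = (\<Sum>k<n. \<Phi> (snd (x ! k)) * \<phi> (pl (take k Ta) * pl (drop (Suc k) Ta)))"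
    unfolding Dp_sum lx pT pT2 by simp
  also have "\<dots> = (\<Sum>k<n. if k = n div 2 \<and> odd n \<and> rev (map fst bs) = map fst bs then
        \<Phi> (snd (x ! k)) * (\<Prod>l<length (drop (Suc k) Ta). \<phi> (snd (rev (take k Ta) ! l) * snd (drop (Suc k) Ta ! l))) else 0)"
  proof (rule sum.cong[OF refl])
    fix k assume k: "k \<in> {..<n}"
    have c: "(map fst (rev (take k Ta)) = map fst (drop (Suc k) Ta)) \<longleftrightarrow> (k = n div 2 \<and> odd n \<and> rev (map fst bs) = map fst bs)"
    proof -
      have e1: "map fst (rev (take k Ta)) = rev (take k (map fst bs))"
        by (simp add: rev_map take_map flip: fstT)
      have e2: "map fst (drop (Suc k) Ta) = drop (Suc k) (map fst bs)"
        by (simp add: drop_map flip: fstT)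
      have "k < length (map fst bs)" using k unfolding n_def by simp
      from pal_iff[OF this] show ?thesis unfolding e1 e2 n_def by auto
    qed
    show "\<Phi> (snd (x ! k)) * \<phi> (pl (take k Ta) * pl (drop (Suc k) Ta)) = (if k = n div 2 \<and> odd n \<and> rev (map fst bs) = map fst bs then
        \<Phi> (snd (x ! k)) * (\<Prod>l<length (drop (Suc k) Ta). \<phi> (snd (rev (take k Ta) ! l) * snd (drop (Suc k) Ta ! l))) else 0)"
      using palin[OF altw_take[OF aT] altw_drop[OF aT], of k "Suc k"] c by simp
  qed
  also have "\<dots> = (if odd n \<and> rev (map fst bs) = map fst bs then
        \<Phi> (snd (x ! (n div 2))) * (\<Prod>l<length (drop (Suc (n div 2)) Ta). \<phi> (snd (rev (take (n div 2) Ta) ! l) * snd (drop (Suc (n div 2)) Ta ! l))) else 0)"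
  proof -
    have "n div 2 < n" using ne unfolding n_def by (cases bs) auto
    thus ?thesis by (auto simp: sum.delta)
  qed
  also have "\<dots> = (if odd n \<and> rev (map fst bs) = map fst bs
                 then (\<Prod>l<(n - 1) div 2. \<phi> (fst (bmul lA rA (x ! l) (x ! (n - 1 - l))))) * \<Phi> (snd (x ! (n div 2)))
                 else 0)"
  proof (cases "odd n")
    case True
    define k0 where "k0 = n div 2"
    have n: "n = Suc (2 * k0)" using True unfolding k0_def by presburger
    have ld: "length (drop (Suc k0) Ta) = k0" using lT n by simp
    have TX: "snd (Ta ! i) = fst (x ! i)" if "i < n" for i
      using that unfolding Ta_def x_def n_def by simp
    have "(\<Prod>l<length (drop (Suc k0) Ta). \<phi> (snd (rev (take k0 Ta) ! l) * snd (drop (Suc k0) Ta ! l)))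
        = (\<Prod>l<k0. (\<lambda>i. \<phi> (fst (x ! i) * fst (x ! (n - 1 - i)))) (k0 - Suc l))"
    proof (unfold ld, rule prod.cong[OF refl])
      fix l assume l: "l \<in> {..<k0}"
      have "rev (take k0 Ta) ! l = Ta ! (k0 - Suc l)" using l lT n by (simp add: rev_nth)
      moreover have "drop (Suc k0) Ta ! l = Ta ! (Suc k0 + l)" using l lT n by simp
      moreover have "n - 1 - (k0 - Suc l) = Suc k0 + l" using l n by simp
      ultimately show "\<phi> (snd (rev (take k0 Ta) ! l) * snd (drop (Suc k0) Ta ! l)) =
          (\<lambda>i. \<phi> (fst (x ! i) * fst (x ! (n - 1 - i)))) (k0 - Suc l)"
        using l n TX by simp
    qed
    also have "\<dots> = (\<Prod>l<k0. \<phi> (fst (x ! l) * fst (x ! (n - 1 - l))))"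
      by (rule prod.nat_diff_reindex)
    also have "\<dots> = (\<Prod>l<(n - 1) div 2. \<phi> (fst (bmul lA rA (x ! l) (x ! (n - 1 - l)))))"
      using n by (simp add: fst_bmul)
    finally show ?thesis unfolding k0_def by (simp add: mult.commute)
  qed simp
  finally have second: "\<Phi> (snd p) = (if odd n \<and> rev (map fst bs) = map fst bs
                 then (\<Prod>l<(n - 1) div 2. \<phi> (fst (bmul lA rA (x ! l) (x ! (n - 1 - l))))) * \<Phi> (snd (x ! (n div 2)))
                 else 0)" .
  show "let n = length bs; x = map snd bs; p = foldr (bmul lA rA) x (1, 0)
         in \<phi> (fst p) = 0 \<and>
            \<Phi> (snd p) =
            (if odd n \<and> rev (map fst bs) = map fst bs
             then (\<Prod>l<(n - 1) div 2. \<phi> (fst (bmul lA rA (x ! l) (x ! (n - 1 - l))))) * \<Phi> (snd (x ! (n div 2)))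
             else 0)"
    unfolding Let_def using first second unfolding p_def x_def n_def by simp
qed

end

theorem corollary3p7:
  fixes smA :: "complex \<Rightarrow> 'a::ring_1 \<Rightarrow> 'a" and \<phi> :: "'a \<Rightarrow> complex"
    and smF :: "complex \<Rightarrow> 'f::ring \<Rightarrow> 'f"
    and lA :: "'a \<Rightarrow> 'f \<Rightarrow> 'f" and rA :: "'f \<Rightarrow> 'a \<Rightarrow> 'f" and \<Phi> :: "'f \<Rightarrow> complex"
    and I :: "'i set" and As :: "'i \<Rightarrow> 'a set" and Fs :: "'i \<Rightarrow> 'f set"
  assumes "ncpsB' smA \<phi> smF lA rA \<Phi>"
    and "\<forall>i\<in>I. subalg smA (As i) \<and> 1 \<in> As i"
    and "\<forall>i\<in>I. subalg smF (Fs i)"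
    and "Bprime_free smA \<phi> smF lA rA \<Phi> I As Fs"
  shows "inf_free (bmul lA rA) (1, 0) (\<lambda>b. \<phi> (fst b)) (\<lambda>b. \<Phi> (snd b)) I
           (\<lambda>i. Bsub smA smF lA rA (As i) (Fs i))"
proof -
  have "fset smA \<phi> smF lA rA \<Phi> I As Fs"
    using assms by (simp add: fset_def fset_axioms_def ncps_def)
  thus ?thesis by (rule fset.main)
qed

end
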